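(* Let $P$ be a positive event pattern, $I$ an event stream, and $G=(V,\mathcal{E})$ the GRETA graph of $P$ and $I$. For $e \in V$ let $Pr(e)=\{p \in V : (p,e)\in\mathcal{E}\}$ be its predecessor events, and define $e.count$ recursively in order of increasing time by $$e.count = [\,e.type = start(P)\,] + \sum_{p \in Pr(e)} p.count,$$ where $[\cdot]$ is $1$ if the condition holds and $0$ otherwise. Then (1) for every $e \in V$, $e.count$ equals the number of directed paths in $G$ (including the one-vertex path) that start at a vertex of type $start(P)$ and end at $e$; and (2) $final\_count := \sum_{e \in V,\ e.type = end(P)} e.count$ equals the number of directed paths in $G$ from a vertex of type $start(P)$ to a vertex of type $end(P)$, i.e., the number of trends captured by $G$.
   Context: Events: each event $e$ has an event type $e.type$ and an occurrence time $e.time \in \mathbb{Q}_{\ge 0}$. An event stream $I$ is a finite collection of distinct events arriving in nondecreasing order of time. Positive patterns: an event type $E$ is a pattern; if $P_i,P_j$ are patterns then $P_i+$ and $\mathsf{SEQ}(P_i,P_j)$ are patterns; each event type occurs at most once in a pattern. Matches over $I$: $matches(E)=\{(e): e\in I, e.type=E\}$; $(e_1,\dots,e_k)\in matches(\mathsf{SEQ}(P_i,P_j))$ iff for some $1\le m\le k$, $(e_1,\dots,e_m)\in matches(P_i)$, $(e_{m+1},\dots,e_k)\in matches(P_j)$ and $e_1.time<\dots<e_k.time$; $matches(P_i+)$ consists of concatenations $s_1\cdots s_k$ ($k\ge1$) with each $s_l\in matches(P_i)$ and the last event of $s_l$ strictly earlier than the first event of $s_{l+1}$. Trends matched by $P$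 in $I$ are the elements of $matches(P)$. Define $start(E)=end(E)=E$, $start(P_i+)=start(P_i)$, $end(P_i+)=end(P_i)$, $start(\mathsf{SEQ}(P_i,P_j))=start(P_i)$, $end(\mathsf{SEQ}(P_i,P_j))=end(P_j)$. The GRETA graph $G=(V,\mathcal{E})$ has as vertices the events of $I$ occurring in at least one trend matched by $P$ in $I$, and an edge $(e_i,e_j)$ iff $e_i,e_j$ are consecutive events, in this order, in some trend matched by $P$ in $I$ (so every edge goes strictly forward in time and $G$ is acyclic). *)

theory Defs
  imports Complex_Main
begin

datatype 't pat = EType 't | PlusP "'t pat" | SeqP "'t pat" "'t pat"

fun pat_types :: "'t pat \<Rightarrow> 't list" where
  "pat_types (EType E) = [E]"
| "pat_types (PlusP P) = pat_types P"
| "pat_types (SeqP P Q) = pat_types P @ pat_types Q"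

definition wf_pat :: "'t pat \<Rightarrow> bool" where
  "wf_pat P \<longleftrightarrow> distinct (pat_types P)"

fun pstart :: "'t pat \<Rightarrow> 't" where
  "pstart (EType E) = E"
| "pstart (PlusP P) = pstart P"
| "pstart (SeqP P Q) = pstart P"

fun pend :: "'t pat \<Rightarrow> 't" where
  "pend (EType E) = E"
| "pend (PlusP P) = pend P"
| "pend (SeqP P Q) = pend Q"

text \<open>Events are abstract objects of type 'e with a type (etype) and an occurrence time (time).
  A stream is a finite set I of (distinct) events.  Trends are lists of events.\<close>
definition strictly_timed :: "('e \<Rightarrow> rat) \<Rightarrow> 'e list \<Rightarrow> bool" where
  "strictly_timed time xs \<longleftrightarrow> sorted_wrt (\<lambda>a b. time a < time b) xs"

inductive is_match :: "('e \<Rightarrow> 't) \<Rightarrow> ('e \<Rightarrow> rat) \<Rightarrow> 'e set \<Rightarrow> 't pat \<Rightarrow> 'e list \<Rightarrow> bool"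
  for etype time I where
  m_type: "e \<in> I \<Longrightarrow> etype e = E \<Longrightarrow> is_match etype time I (EType E) [e]"
| m_seq: "is_match etype time I P xs \<Longrightarrow> is_match etype time I Q ys \<Longrightarrow>
          strictly_timed time (xs @ ys) \<Longrightarrow> is_match etype time I (SeqP P Q) (xs @ ys)"
| m_plus1: "is_match etype time I P xs \<Longrightarrow> is_match etype time I (PlusP P) xs"
| m_plus2: "is_match etype time I (PlusP P) xs \<Longrightarrow> is_match etype time I P ys \<Longrightarrow>
          time (last xs) < time (hd ys) \<Longrightarrow> is_match etype time I (PlusP P) (xs @ ys)"

definition matches :: "('e \<Rightarrow> 't) \<Rightarrow> ('e \<Rightarrow> rat) \<Rightarrow> 'e set \<Rightarrow> 't pat \<Rightarrow> 'e list set" where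
  "matches etype time I P = {xs. is_match etype time I P xs}"

definition greta_V :: "('e \<Rightarrow> 't) \<Rightarrow> ('e \<Rightarrow> rat) \<Rightarrow> 'e set \<Rightarrow> 't pat \<Rightarrow> 'e set" where
  "greta_V etype time I P = {e. \<exists>tr \<in> matches etype time I P. e \<in> set tr}"

definition greta_E :: "('e \<Rightarrow> 't) \<Rightarrow> ('e \<Rightarrow> rat) \<Rightarrow> 'e set \<Rightarrow> 't pat \<Rightarrow> ('e \<times> 'e) set" where
  "greta_E etype time I P = {(a, b). \<exists>tr \<in> matches etype time I P.
      \<exists>i. Suc i < length tr \<and> tr ! i = a \<and> tr ! Suc i = b}"

definition is_path :: "'e set \<Rightarrow> ('e \<times> 'e) set \<Rightarrow> 'e list \<Rightarrow> bool" where
  "is_path V E xs \<longleftrightarrow> xs \<noteq> [] \<and> set xs \<subseteq> V \<and>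
     (\<forall>i. Suc i < length xs \<longrightarrow> (xs ! i, xs ! Suc i) \<in> E)"

end

theory Submission
  imports Defs
begin

lemma path_sorted:
  assumes "is_path V E xs" "\<And>a b. (a,b) \<in> E \<Longrightarrow> f a < (f b :: rat)"
  shows "sorted_wrt (\<lambda>a b. f a < f b) xs"
proof -
  have "transp (\<lambda>a b. f a < f b)" by (auto simp: transp_def)
  then show ?thesis using assms by (auto simp: is_path_def sorted_wrt_iff_nth_Suc_transp)
qed

lemma path_distinct:
  assumes "is_path V E xs" "\<And>a b. (a,b) \<in> E \<Longrightarrow> f a < (f b :: rat)"
  shows "distinct xs"
proof -
  have "sorted_wrt (\<lambda>a b. f a < f b) xs" by (rule path_sorted[OF assms])
  then have "sorted_wrt (<) (map f xs)" by (simp add: sorted_wrt_map)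
  then have "distinct (map f xs)" using strict_sorted_iff by blast
  then show ?thesis by (simp add: distinct_map)
qed

lemma path_snoc:
  "is_path V E (xs @ [e]) \<longleftrightarrow> (xs = [] \<and> e \<in> V) \<or> (is_path V E xs \<and> e \<in> V \<and> (last xs, e) \<in> E)"
proof (cases xs rule: rev_cases)
  case Nil then show ?thesis by (auto simp: is_path_def)
next
  case (snoc ys y)
  show ?thesis
  proof
    assume h: "is_path V E (xs @ [e])"
    have "\<forall>i. Suc i < length xs \<longrightarrow> (xs ! i, xs ! Suc i) \<in> E"
    proof (intro allI impI)
      fix i assume "Suc i < length xs"
      with h have "((xs@[e]) ! i, (xs@[e]) ! Suc i) \<in> E" by (auto simp: is_path_def)
      then show "(xs ! i, xs ! Suc i) \<in> E" using \<open>Suc i < length xs\<close> by (simp add: nth_append)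
    qed
    moreover have "((xs@[e]) ! length ys, (xs@[e]) ! Suc (length ys)) \<in> E"
      using h snoc by (auto simp: is_path_def)
    ultimately show "(xs = [] \<and> e \<in> V) \<or> (is_path V E xs \<and> e \<in> V \<and> (last xs, e) \<in> E)"
      using h snoc by (auto simp: is_path_def nth_append)
  next
    assume h: "(xs = [] \<and> e \<in> V) \<or> (is_path V E xs \<and> e \<in> V \<and> (last xs, e) \<in> E)"
    then have h2: "is_path V E xs" "e \<in> V" "(last xs, e) \<in> E" using snoc by auto
    show "is_path V E (xs @ [e])" unfolding is_path_def
    proof (intro conjI allI impI)
      show "xs @ [e] \<noteq> []" by simp
      show "set (xs @ [e]) \<subseteq> V" using h2 by (auto simp: is_path_def)
      fix i assume i: "Suc i < length (xs @ [e])"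
      show "((xs @ [e]) ! i, (xs @ [e]) ! Suc i) \<in> E"
      proof (cases "Suc i < length xs")
        case True then show ?thesis using h2 by (auto simp: is_path_def nth_append)
      next
        case False
        then have "Suc i = length xs" using i by simp
        then show ?thesis using h2 snoc by (auto simp: nth_append)
      qed
    qed
  qed
qed

definition ptos where
  "ptos V E S e = {xs. is_path V E xs \<and> S (hd xs) \<and> last xs = e}"

lemma ptos_finite:
  assumes "finite V" "\<And>a b. (a,b) \<in> E \<Longrightarrow> f a < (f b :: rat)"
  shows "finite (ptos V E S e)"
proof (rule finite_subset[OF _ finite_subset_distinct[OF assms(1)]])
  show "ptos V E S e \<subseteq> {xs. set xs \<subseteq> V \<and> distinct xs}"
  proof
    fix xs assume "xs \<in> ptos V E S e"
    then have "is_path V E xs" by (simp add: ptos_def)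
    then show "xs \<in> {xs. set xs \<subseteq> V \<and> distinct xs}"
      using path_distinct[OF \<open>is_path V E xs\<close> assms(2)] by (auto simp: is_path_def)
  qed
qed

lemma ptos_decomp:
  assumes "e \<in> V"
  shows "ptos V E S e = (if S e then {[e]} else {}) \<union>
     (\<Union>p \<in> {p \<in> V. (p, e) \<in> E}. (\<lambda>xs. xs @ [e]) ` ptos V E S p)"
proof (intro equalityI subsetI)
  fix xs assume "xs \<in> ptos V E S e"
  then have h: "is_path V E xs" "S (hd xs)" "last xs = e" by (auto simp: ptos_def)
  then have "xs \<noteq> []" by (auto simp: is_path_def)
  then obtain ys where ys: "xs = ys @ [e]" using h(3) by (metis append_butlast_last_id)
  show "xs \<in> (if S e then {[e]} else {}) \<union>
     (\<Union>p \<in> {p \<in> V. (p, e) \<in> E}. (\<lambda>xs. xs @ [e]) ` ptos V E S p)"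
  proof (cases "ys = []")
    case True then show ?thesis using ys h by auto
  next
    case False
    then have "is_path V E ys" "(last ys, e) \<in> E" using h(1) ys path_snoc[of V E ys e] by auto
    moreover have "last ys \<in> V" using \<open>is_path V E ys\<close> False by (auto simp: is_path_def)
    moreover have "S (hd ys)" using h(2) ys False by simp
    ultimately show ?thesis using ys by (auto simp: ptos_def)
  qed
next
  fix xs assume "xs \<in> (if S e then {[e]} else {}) \<union>
     (\<Union>p \<in> {p \<in> V. (p, e) \<in> E}. (\<lambda>xs. xs @ [e]) ` ptos V E S p)"
  then show "xs \<in> ptos V E S e"
  proof
    assume "xs \<in> (if S e then {[e]} else {})"
    then show ?thesis using assms by (auto simp: ptos_def is_path_def split: if_splits)
  next
    assume "xs \<in> (\<Union>p \<in> {p \<in> V. (p, e) \<in> E}. (\<lambda>xs. xs @ [e]) ` ptos V E S p)"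
    then obtain p ys where "p \<in> V" "(p,e) \<in> E" "ys \<in> ptos V E S p" "xs = ys @ [e]" by auto
    moreover then have "ys \<noteq> []" by (auto simp: ptos_def is_path_def)
    ultimately show ?thesis using assms path_snoc[of V E ys e] by (auto simp: ptos_def)
  qed
qed

lemma ptos_card:
  assumes "finite V" "\<And>a b. (a,b) \<in> E \<Longrightarrow> f a < (f b :: rat)" "e \<in> V"
  shows "card (ptos V E S e) = (if S e then 1 else 0) +
     (\<Sum>p \<in> {p \<in> V. (p, e) \<in> E}. card (ptos V E S p))"
proof -
  let ?A = "(if S e then {[e]} else {})"
  let ?B = "(\<Union>p \<in> {p \<in> V. (p, e) \<in> E}. (\<lambda>xs. xs @ [e]) ` ptos V E S p)"
  have fin: "\<And>p. finite (ptos V E S p)" using ptos_finite[OF assms(1,2)] .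
  have ne: "\<And>p ys. ys \<in> ptos V E S p \<Longrightarrow> ys \<noteq> []" by (auto simp: ptos_def is_path_def)
  have "card ?B = (\<Sum>p \<in> {p \<in> V. (p, e) \<in> E}. card ((\<lambda>xs. xs @ [e]) ` ptos V E S p))"
  proof (rule card_UN_disjoint)
    show "finite {p \<in> V. (p, e) \<in> E}" using assms(1) by simp
    show "\<forall>i\<in>{p \<in> V. (p, e) \<in> E}. finite ((\<lambda>xs. xs @ [e]) ` ptos V E S i)" using fin by simp
    show "\<forall>i\<in>{p \<in> V. (p, e) \<in> E}. \<forall>j\<in>{p \<in> V. (p, e) \<in> E}. i \<noteq> j \<longrightarrow>
        (\<lambda>xs. xs @ [e]) ` ptos V E S i \<inter> (\<lambda>xs. xs @ [e]) ` ptos V E S j = {}"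
      by (auto simp: ptos_def)
  qed
  also have "\<dots> = (\<Sum>p \<in> {p \<in> V. (p, e) \<in> E}. card (ptos V E S p))"
    by (intro sum.cong refl card_image) (auto simp: inj_on_def)
  finally have cB: "card ?B = (\<Sum>p \<in> {p \<in> V. (p, e) \<in> E}. card (ptos V E S p))" .
  have "?A \<inter> ?B = {}" using ne by auto
  moreover have "finite ?B" using fin assms(1) by auto
  ultimately have "card (?A \<union> ?B) = card ?A + card ?B" by (intro card_Un_disjoint) auto
  then show ?thesis using ptos_decomp[OF assms(3), of E S] cB by simp
qed

lemma count_ptos:
  assumes "finite V" "\<And>a b. (a,b) \<in> E \<Longrightarrow> f a < (f b :: rat)"
    and cnt: "\<forall>e \<in> V. count e = (if S e then 1 else 0) + (\<Sum>p \<in> {p \<in> V. (p, e) \<in> E}. count p)"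
  shows "\<forall>e \<in> V. count e = card (ptos V E S e)"
proof -
  have "\<forall>e \<in> V. card {v \<in> V. f v < f e} = n \<longrightarrow> count e = card (ptos V E S e)" for n
  proof (induction n rule: less_induct)
    case (less n)
    show ?case
    proof (intro ballI impI)
      fix e assume e: "e \<in> V" and n: "card {v \<in> V. f v < f e} = n"
      have "count p = card (ptos V E S p)" if p: "p \<in> {p \<in> V. (p, e) \<in> E}" for p
      proof -
        have lt: "f p < f e" using p assms(2) by auto
        have "{v \<in> V. f v < f p} \<subset> {v \<in> V. f v < f e}" using lt p by auto
        moreover have "finite {v \<in> V. f v < f e}" using assms(1) by simp
        ultimately have "card {v \<in> V. f v < f p} < n" using n psubset_card_mono by blast
        then show ?thesis using less p by auto
      qed
      then have "(\<Sum>p \<in> {p \<in> V. (p, e) \<in> E}. count p) = (\<Sum>p \<in> {p \<in> V. (p, e) \<in> E}. card (ptos V E S p))"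
        by (intro sum.cong) auto
      moreover have "count e = (if S e then 1 else 0) + (\<Sum>p \<in> {p \<in> V. (p, e) \<in> E}. count p)"
        using cnt e by blast
      moreover note ptos_card[OF assms(1,2) e, where S=S]
      ultimately show "count e = card (ptos V E S e)" by simp
    qed
  qed
  then show ?thesis by blast
qed

lemma hd_le:
  assumes "sorted_wrt (\<lambda>a b. time a < (time b::rat)) ys" "ys \<noteq> []" "y \<in> set ys"
  shows "time (hd ys) \<le> time y"
  using assms by (cases ys) auto

lemma last_le:
  assumes "sorted_wrt (\<lambda>a b. time a < (time b::rat)) xs" "xs \<noteq> []" "x \<in> set xs"
  shows "time x \<le> time (last xs)"
proof -
  have "xs = butlast xs @ [last xs]" using assms(2) by simp
  then have "sorted_wrt (\<lambda>a b. time a < (time b::rat)) (butlast xs @ [last xs])" using assms(1) by metis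
  then have "\<forall>z \<in> set (butlast xs). time z < time (last xs)" by (simp add: sorted_wrt_append)
  moreover have "x \<in> set (butlast xs) \<or> x = last xs" using assms(3) \<open>xs = _\<close>
    by (metis in_set_butlastD last_in_set list.set_intros(1) rotate1.simps(2) set_ConsD set_rotate1)
  ultimately show ?thesis by fastforce
qed

lemma match_props:
  "is_match etype time I P xs \<Longrightarrow> xs \<noteq> [] \<and> set xs \<subseteq> I \<and> strictly_timed time xs"
proof (induction rule: is_match.induct)
  case (m_type e E) then show ?case by (simp add: strictly_timed_def)
next
  case (m_seq P xs Q ys) then show ?case by auto
next
  case (m_plus1 P xs) then show ?case by auto
next
  case (m_plus2 P xs ys)
  have "\<forall>x \<in> set xs. \<forall>y \<in> set ys. time x < time y"
  proof (intro ballI)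
    fix x y assume "x \<in> set xs" "y \<in> set ys"
    then have "time x \<le> time (last xs)" "time (hd ys) \<le> time y"
      using m_plus2 last_le hd_le unfolding strictly_timed_def by metis+
    then show "time x < time y" using m_plus2(3) by linarith
  qed
  then show ?case using m_plus2 by (auto simp: strictly_timed_def sorted_wrt_append)
qed

theorem theorem3:
  fixes etype :: "'e \<Rightarrow> 't" and time :: "'e \<Rightarrow> rat" and I :: "'e set" and P :: "'t pat"
    and count :: "'e \<Rightarrow> nat"
  assumes wfP: "wf_pat P"
    and finI: "finite I"
    and nonneg: "\<forall>e \<in> I. time e \<ge> 0"
    and count_def: "\<forall>e \<in> greta_V etype time I P.
        count e = (if etype e = pstart P then 1 else 0)
          + (\<Sum>p \<in> {p \<in> greta_V etype time I P. (p, e) \<in> greta_E etype time I P}. count p)"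
  shows "(\<forall>e \<in> greta_V etype time I P.
           count e = card {xs. is_path (greta_V etype time I P) (greta_E etype time I P) xs
                               \<and> etype (hd xs) = pstart P \<and> last xs = e})
       \<and> (\<Sum>e \<in> {e \<in> greta_V etype time I P. etype e = pend P}. count e)
           = card {xs. is_path (greta_V etype time I P) (greta_E etype time I P) xs
                       \<and> etype (hd xs) = pstart P \<and> etype (last xs) = pend P}"
proof -
  let ?V = "greta_V etype time I P" and ?E = "greta_E etype time I P"
  let ?S = "\<lambda>x. etype x = pstart P"
  have "?V \<subseteq> I" using match_props by (fastforce simp: greta_V_def matches_def)
  then have finV: "finite ?V" using finI finite_subset by blast
  have inc: "time a < time b" if ab: "(a, b) \<in> ?E" for a b
  proof -
    obtain tr i where "is_match etype time I P tr" "Suc i < length tr" "tr ! i = a" "tr ! Suc i = b"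
      using ab unfolding greta_E_def matches_def by blast
    then show ?thesis using match_props[of etype time I P tr] sorted_wrt_nth_less[of _ tr i "Suc i"]
      by (auto simp: strictly_timed_def)
  qed
  have c: "\<forall>e \<in> ?V. count e = card (ptos ?V ?E ?S e)"
    by (rule count_ptos[OF finV inc count_def]) 
  have part1: "\<forall>e \<in> ?V. count e = card {xs. is_path ?V ?E xs \<and> ?S (hd xs) \<and> last xs = e}"
    using c by (simp add: ptos_def)
  have "(\<Sum>e \<in> {e \<in> ?V. etype e = pend P}. count e)
      = (\<Sum>e \<in> {e \<in> ?V. etype e = pend P}. card (ptos ?V ?E ?S e))"
    using c by (intro sum.cong) auto
  also have "\<dots> = card (\<Union>e \<in> {e \<in> ?V. etype e = pend P}. ptos ?V ?E ?S e)"
    using finV ptos_finite[OF finV inc] by (intro card_UN_disjoint[symmetric]) (auto simp: ptos_def)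
  also have "(\<Union>e \<in> {e \<in> ?V. etype e = pend P}. ptos ?V ?E ?S e)
      = {xs. is_path ?V ?E xs \<and> ?S (hd xs) \<and> etype (last xs) = pend P}"
    by (auto simp: ptos_def is_path_def intro: subsetD[OF _ last_in_set])
  finally show ?thesis using part1 by simp
qed

end
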